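(* Let $\mathbb F\in\{\mathbb C,\mathbb R\}$, $n>1$, and $\gamma=(\gamma_1,\dots,\gamma_n)\in\mathbb F^n$ such that $\operatorname{diag}(\gamma_1,\dots,\gamma_n)$ is not proportional to the identity matrix. Let $\mathfrak t_\gamma(n)$ and ${\rm T}_\gamma(n)$ be as in the context. For $B=(b_{ij})\in{\rm T}_\gamma(n)$ with inverse $B^{-1}=(\widehat b_{ij})$, the coadjoint action ${\rm Ad}^*_B$ maps the point of $\mathfrak t_\gamma^*(n)$ with coordinates $(x_{ij})_{j<i}$, $x_0$ to the point with coordinates $(\mathcal I_{ij})_{j<i}$, $\mathcal I_0$, where \[ \mathcal I_{ij}=\sum_{i\leqslant i',\,j'\leqslant j}b_{ii'}\widehat b_{j'j}x_{i'j'}, \quad j<i, \qquad \mathcal I_0=x_0+\sum_{j<i}\,\sum_{j\leqslant l\leqslant i}\gamma_lb_{li}\widehat b_{jl}x_{ij} \] (equivalently, the strictly lower triangular part of $\mathcal I$ is $BXB^{-1}$). Consequently these expressions, as functions of $B\in{\rm T}_\gamma(n)$ and of the coordinates $x$, form a complete set of functionally independent lifted invariants of ${\rm Ad}^*_{{\rm T}_\gamma(n)}$.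
   Context: $\mathfrak t_\gamma(n)$ is the Lie algebra over $\mathbb F$ with basis $e_{ij}$ ($1\leqslant i<j\leqslant n$) and $f$, with brackets $[e_{ij},e_{i'j'}]=\delta_{i'j}e_{ij'}-\delta_{ij'}e_{i'j}$ and $[f,e_{ij}]=(\gamma_i-\gamma_j)e_{ij}$; it is realized by matrices via $e_{ij}\sim E^n_{ij}$ (matrix unit) and $f\sim\operatorname{diag}(\gamma_1,\dots,\gamma_n)$. It is the Lie algebra of the group ${\rm T}_\gamma(n)=\{B\text{ nonsingular upper triangular } n\times n \mid \exists\,\varepsilon\in\mathbb F:\ b_{ii}=e^{\gamma_i\varepsilon}\ \forall i\}$, acting by the adjoint action ${\rm Ad}_BY=BYB^{-1}$. For $i<j$, $x_{ji}$ denotes the coordinate function on the dual space $\mathfrak t_\gamma^*(n)$ dual to $e_{ij}$ (i.e. with respect to the dual basis $e^*_{ji}$, $\langle e^*_{j'i'},e_{ij}\rangle=\delta_{ii'}\delta_{jj'}$), and $x_0$ the coordinate dual to $f$; $X$ is the strictly lower triangular $n\times n$ matrix with entries $x_{ij}$ for $i>j$ and zeros elsewhere. The coadjoint action is $({\rm Ad}^*_B\xi)(y)=\xi({\rm Ad}_{B^{-1}}y)$. A lifted invariant (in the sense of the moving-frame method of Fels and Olver) is a component of the map $(B,\xi)\mapsto{\rm Ad}^*_B\xi$ written in coordinates. *)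

theory Defs
  imports "HOL-Analysis.Analysis"
begin

text \<open>n x n matrices are functions nat => nat => 'a, only entries with indices in {1..n} matter.\<close>

definition mmult :: "nat \<Rightarrow> (nat \<Rightarrow> nat \<Rightarrow> 'a::comm_ring_1) \<Rightarrow> (nat \<Rightarrow> nat \<Rightarrow> 'a) \<Rightarrow> nat \<Rightarrow> nat \<Rightarrow> 'a" where
  "mmult n A C = (\<lambda>i j. \<Sum>k=1..n. A i k * C k j)"

definition is_inverse :: "nat \<Rightarrow> (nat \<Rightarrow> nat \<Rightarrow> 'a::comm_ring_1) \<Rightarrow> (nat \<Rightarrow> nat \<Rightarrow> 'a) \<Rightarrow> bool" where
  "is_inverse n B Bi \<longleftrightarrow> (\<forall>i\<in>{1..n}. \<forall>j\<in>{1..n}.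
      mmult n B Bi i j = (if i = j then 1 else 0) \<and> mmult n Bi B i j = (if i = j then 1 else 0))"

definition T_gamma :: "nat \<Rightarrow> (nat \<Rightarrow> 'a::{real_normed_field,banach}) \<Rightarrow> (nat \<Rightarrow> nat \<Rightarrow> 'a) set" where
  "T_gamma n \<gamma> = {B. (\<forall>i\<in>{1..n}. \<forall>j\<in>{1..n}. j < i \<longrightarrow> B i j = 0)
                     \<and> (\<exists>Bi. is_inverse n B Bi)
                     \<and> (\<exists>\<epsilon>. \<forall>i\<in>{1..n}. B i i = exp (\<gamma> i * \<epsilon>))}"

text \<open>An element of t_gamma(n) is given by coordinates (y, y0): y i j (1 <= i < j <= n) is the
  coefficient of e_ij, y0 the coefficient of f. Its matrix realization:\<close>
definition realize :: "nat \<Rightarrow> (nat \<Rightarrow> 'a::comm_ring_1) \<Rightarrow> (nat \<Rightarrow> nat \<Rightarrow> 'a) \<times> 'a \<Rightarrow> nat \<Rightarrow> nat \<Rightarrow> 'a" where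
  "realize n \<gamma> y = (\<lambda>i j. if i \<in> {1..n} \<and> j \<in> {1..n} then
       (if i < j then fst y i j else if i = j then snd y * \<gamma> i else 0) else 0)"

definition lie_coords :: "nat \<Rightarrow> (nat \<Rightarrow> 'a::comm_ring_1) \<Rightarrow> (nat \<Rightarrow> nat \<Rightarrow> 'a) \<Rightarrow> (nat \<Rightarrow> nat \<Rightarrow> 'a) \<times> 'a" where
  "lie_coords n \<gamma> Y = ((\<lambda>i j. if 1 \<le> i \<and> i < j \<and> j \<le> n then Y i j else 0),
                        (THE c. \<forall>i\<in>{1..n}. Y i i = c * \<gamma> i))"

text \<open>Adjoint action Ad_P y = P Y P^{-1}, where Q is the inverse of P.\<close>
definition Ad :: "nat \<Rightarrow> (nat \<Rightarrow> 'a::comm_ring_1) \<Rightarrow> (nat \<Rightarrow> nat \<Rightarrow> 'a) \<Rightarrow> (nat \<Rightarrow> nat \<Rightarrow> 'a)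
                  \<Rightarrow> (nat \<Rightarrow> nat \<Rightarrow> 'a) \<times> 'a \<Rightarrow> (nat \<Rightarrow> nat \<Rightarrow> 'a) \<times> 'a" where
  "Ad n \<gamma> P Q y = lie_coords n \<gamma> (mmult n (mmult n P (realize n \<gamma> y)) Q)"

text \<open>A point xi of the dual space with coordinates (x, x0): x i j (1 <= j < i <= n) is
  the value on e_ji, x0 the value on f.\<close>
definition dual_pair :: "nat \<Rightarrow> (nat \<Rightarrow> nat \<Rightarrow> 'a::comm_ring_1) \<times> 'a \<Rightarrow> (nat \<Rightarrow> nat \<Rightarrow> 'a) \<times> 'a \<Rightarrow> 'a" where
  "dual_pair n \<xi> y = (\<Sum>i=1..n. \<Sum>j=1..n. if j < i then fst \<xi> i j * fst y j i else 0) + snd \<xi> * snd y"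

definition coAd :: "nat \<Rightarrow> (nat \<Rightarrow> 'a::comm_ring_1) \<Rightarrow> (nat \<Rightarrow> nat \<Rightarrow> 'a) \<Rightarrow> (nat \<Rightarrow> nat \<Rightarrow> 'a)
                  \<Rightarrow> (nat \<Rightarrow> nat \<Rightarrow> 'a) \<times> 'a \<Rightarrow> (nat \<Rightarrow> nat \<Rightarrow> 'a) \<times> 'a \<Rightarrow> 'a" where
  "coAd n \<gamma> B Bi \<xi> = (\<lambda>y. dual_pair n \<xi> (Ad n \<gamma> Bi B y))"

definition basis_e :: "nat \<Rightarrow> nat \<Rightarrow> (nat \<Rightarrow> nat \<Rightarrow> 'a::comm_ring_1) \<times> 'a" where
  "basis_e i j = ((\<lambda>a b. if a = i \<and> b = j then 1 else 0), 0)"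

definition basis_f :: "(nat \<Rightarrow> nat \<Rightarrow> 'a::comm_ring_1) \<times> 'a" where
  "basis_f = ((\<lambda>a b. 0), 1)"

definition lowerX :: "nat \<Rightarrow> (nat \<Rightarrow> nat \<Rightarrow> 'a::comm_ring_1) \<Rightarrow> nat \<Rightarrow> nat \<Rightarrow> 'a" where
  "lowerX n x = (\<lambda>i j. if 1 \<le> j \<and> j < i \<and> i \<le> n then x i j else 0)"

end

theory Submission imports Defs begin

lemma Bi_upper:
  assumes UB: "\<And>i j. i\<in>{1..n} \<Longrightarrow> j\<in>{1..n} \<Longrightarrow> j<i \<Longrightarrow> B i j = (0::'a::comm_ring_1)"
  and BD: "\<And>i. i\<in>{1..n} \<Longrightarrow> B i i \<noteq> 0"
  and inv: "is_inverse n B Bi"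
  and dom: "\<And>a b::'a. a * b = 0 \<Longrightarrow> b \<noteq> 0 \<Longrightarrow> a = 0"
  shows "i\<in>{1..n} \<Longrightarrow> j\<in>{1..n} \<Longrightarrow> j<i \<Longrightarrow> Bi i j = 0"
proof (induction j arbitrary: i rule: less_induct)
  case (less j)
  have "mmult n Bi B i j = 0" using inv less.prems unfolding is_inverse_def by auto
  hence "(\<Sum>k=1..n. Bi i k * B k j) = 0" by (simp add: mmult_def)
  moreover have "(\<Sum>k=1..n. Bi i k * B k j) = (\<Sum>k=1..n. if k = j then Bi i j * B j j else 0)"
  proof (rule sum.cong[OF refl])
    fix k assume k: "k \<in> {1..n}"
    show "Bi i k * B k j = (if k = j then Bi i j * B j j else 0)"
    proof (cases "k < j")
      case True then have "Bi i k = 0" using less.IH[of k i] k less.prems by auto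
      then show ?thesis using True by simp
    next
      case False
      show ?thesis
      proof (cases "k = j")
        case True then show ?thesis by simp
      next
        case False2: False
        then have "B k j = 0" using UB[of k j] k less.prems \<open>\<not> k<j\<close> by auto
        then show ?thesis using False2 by simp
      qed
    qed
  qed
  ultimately have "Bi i j * B j j = 0" using less.prems by simp
  then show ?case using BD less.prems dom by blast
qed

lemma mmult_assoc: "mmult n (mmult n A C) D = mmult n A (mmult n C D)"
  unfolding mmult_def fun_eq_iff
  by (auto simp: sum_distrib_left sum_distrib_right mult.assoc intro: sum.swap)

lemma coAd_e:
  fixes B Bi x :: "nat \<Rightarrow> nat \<Rightarrow> 'a::field"
  assumes UB: "\<And>i j. i\<in>{1..n} \<Longrightarrow> j\<in>{1..n} \<Longrightarrow> j<i \<Longrightarrow> B i j = 0"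
  and UBi: "\<And>i j. i\<in>{1..n} \<Longrightarrow> j\<in>{1..n} \<Longrightarrow> j<i \<Longrightarrow> Bi i j = 0"
  and g: "z \<in> {1..n}" "\<gamma> z \<noteq> 0"
  and ji: "1 \<le> j" "j < i" "i \<le> n"
  shows "coAd n \<gamma> B Bi (x,x0) (basis_e j i) = (\<Sum>a=1..n. \<Sum>b=1..n. if b<a then x a b * (Bi b j * B i a) else 0)"
proof -
  have R: "realize n \<gamma> (basis_e j i) = (\<lambda>a b. if a = j \<and> b = i then 1 else 0)"
    using ji by (auto simp: realize_def basis_e_def fun_eq_iff)
  have M1: "mmult n Bi (realize n \<gamma> (basis_e j i)) = (\<lambda>a c. if c = i then Bi a j else 0)"
    using ji unfolding R mmult_def by (auto simp: fun_eq_iff if_distrib cong: if_cong)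
  have M: "mmult n (mmult n Bi (realize n \<gamma> (basis_e j i))) B = (\<lambda>a b. Bi a j * B i b)"
    using ji unfolding M1 by (simp add: mmult_def fun_eq_iff if_distrib[where f="\<lambda>u. u * _"] cong: if_cong)
  have diag0: "\<forall>a\<in>{1..n}. Bi a j * B i a = 0"
  proof
    fix a assume a: "a \<in> {1..n}"
    show "Bi a j * B i a = 0"
    proof (cases "a < i")
      case True then show ?thesis using UB[of i a] a ji by auto
    next
      case False then show ?thesis using UBi[of a j] a ji by auto
    qed
  qed
  have th: "(THE c. \<forall>a\<in>{1..n}. Bi a j * B i a = c * \<gamma> a) = 0"
  proof (rule the_equality)
    show "\<forall>a\<in>{1..n}. Bi a j * B i a = 0 * \<gamma> a" using diag0 by simp
  next
    fix c assume "\<forall>a\<in>{1..n}. Bi a j * B i a = c * \<gamma> a"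
    then have "c * \<gamma> z = 0" using diag0 g by auto
    then show "c = 0" using g by simp
  qed
  show ?thesis
    unfolding coAd_def Ad_def M lie_coords_def dual_pair_def th
    by (auto intro!: sum.cong)
qed

lemma coAd_f:
  fixes B Bi x :: "nat \<Rightarrow> nat \<Rightarrow> 'a::field"
  assumes UB: "\<And>i j. i\<in>{1..n} \<Longrightarrow> j\<in>{1..n} \<Longrightarrow> j<i \<Longrightarrow> B i j = 0"
  and UBi: "\<And>i j. i\<in>{1..n} \<Longrightarrow> j\<in>{1..n} \<Longrightarrow> j<i \<Longrightarrow> Bi i j = 0"
  and Di: "\<And>a. a\<in>{1..n} \<Longrightarrow> Bi a a * B a a = 1"
  and g: "z \<in> {1..n}" "\<gamma> z \<noteq> 0"
  shows "coAd n \<gamma> B Bi (x,x0) basis_f = x0 + (\<Sum>a=1..n. \<Sum>b=1..n. if b<a then x a b * (\<Sum>l=1..n. Bi b l * \<gamma> l * B l a) else 0)"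
proof -
  have R: "realize n \<gamma> basis_f = (\<lambda>a b. if a\<in>{1..n} \<and> b\<in>{1..n} \<and> a = b then \<gamma> a else 0)"
    by (auto simp: realize_def basis_f_def fun_eq_iff)
  have M1: "mmult n Bi (realize n \<gamma> basis_f) = (\<lambda>a c. if c\<in>{1..n} then Bi a c * \<gamma> c else 0)"
    unfolding R mmult_def by (auto simp: fun_eq_iff if_distrib cong: if_cong)
  have M: "mmult n (mmult n Bi (realize n \<gamma> basis_f)) B = (\<lambda>a b. \<Sum>l=1..n. Bi a l * \<gamma> l * B l b)"
    unfolding M1 by (simp add: mmult_def fun_eq_iff)
  have diag: "(\<Sum>l=1..n. Bi a l * \<gamma> l * B l a) = \<gamma> a" if a: "a \<in> {1..n}" for a
  proof -
    have "(\<Sum>l=1..n. Bi a l * \<gamma> l * B l a) = (\<Sum>l=1..n. if l = a then \<gamma> a else 0)"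
    proof (rule sum.cong[OF refl])
      fix l assume l: "l \<in> {1..n}"
      show "Bi a l * \<gamma> l * B l a = (if l = a then \<gamma> a else 0)"
      proof (cases "l < a")
        case True then show ?thesis using UBi[of a l] a l by auto
      next
        case False
        show ?thesis
        proof (cases "l = a")
          case True then show ?thesis using Di[OF a] by (simp add: algebra_simps)
        next
          case False2: False
          then show ?thesis using UB[of l a] a l False by auto
        qed
      qed
    qed
    then show ?thesis using a by simp
  qed
  have th: "(THE c. \<forall>a\<in>{1..n}. (\<Sum>l=1..n. Bi a l * \<gamma> l * B l a) = c * \<gamma> a) = 1"
  proof (rule the_equality)
    show "\<forall>a\<in>{1..n}. (\<Sum>l=1..n. Bi a l * \<gamma> l * B l a) = 1 * \<gamma> a" using diag by simp
  next
    fix c assume "\<forall>a\<in>{1..n}. (\<Sum>l=1..n. Bi a l * \<gamma> l * B l a) = c * \<gamma> a"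
    then have "c * \<gamma> z = 1 * \<gamma> z" using diag g by auto
    then show "c = 1" using g by simp
  qed
  show ?thesis
    unfolding coAd_def Ad_def M lie_coords_def dual_pair_def th
    by (auto simp: add.commute intro!: sum.cong)
qed

lemma L1:
  fixes B Bi x :: "nat \<Rightarrow> nat \<Rightarrow> 'a::field"
  assumes UB: "\<And>i j. i\<in>{1..n} \<Longrightarrow> j\<in>{1..n} \<Longrightarrow> j<i \<Longrightarrow> B i j = 0"
  and UBi: "\<And>i j. i\<in>{1..n} \<Longrightarrow> j\<in>{1..n} \<Longrightarrow> j<i \<Longrightarrow> Bi i j = 0"
  and ji: "1 \<le> j" "j < i" "i \<le> n"
  shows "(\<Sum>i'=i..n. \<Sum>j'=1..j. B i i' * Bi j' j * x i' j') = (\<Sum>a=1..n. \<Sum>b=1..n. if b<a then x a b * (Bi b j * B i a) else 0)"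
proof (rule sum.mono_neutral_cong_left)
  show "{i..n} \<subseteq> {1..n}" using ji by auto
  show "\<forall>a\<in>{1..n} - {i..n}. (\<Sum>b=1..n. if b<a then x a b * (Bi b j * B i a) else 0) = 0"
  proof
    fix a assume a: "a \<in> {1..n} - {i..n}"
    then have "B i a = 0" using UB[of i a] ji by auto
    then show "(\<Sum>b=1..n. if b<a then x a b * (Bi b j * B i a) else 0) = 0" by (intro sum.neutral) simp
  qed
  fix a assume a: "a \<in> {i..n}"
  show "(\<Sum>j'=1..j. B i a * Bi j' j * x a j') = (\<Sum>b=1..n. if b<a then x a b * (Bi b j * B i a) else 0)"
  proof (rule sum.mono_neutral_cong_left)
    show "{1..j} \<subseteq> {1..n}" using ji by auto
    show "\<forall>b\<in>{1..n} - {1..j}. (if b<a then x a b * (Bi b j * B i a) else 0) = 0"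
      using UBi[of _ j] ji by auto
    fix b assume "b \<in> {1..j}"
    then show "B i a * Bi b j * x a b = (if b<a then x a b * (Bi b j * B i a) else 0)"
      using a ji by auto
  qed auto
qed auto

lemma L2:
  fixes B Bi x :: "nat \<Rightarrow> nat \<Rightarrow> 'a::field"
  shows "mmult n (mmult n B (lowerX n x)) Bi i j = (\<Sum>a=1..n. \<Sum>b=1..n. if b<a then x a b * (Bi b j * B i a) else 0)"
proof -
  have "mmult n (mmult n B (lowerX n x)) Bi i j = (\<Sum>b=1..n. \<Sum>a=1..n. B i a * lowerX n x a b * Bi b j)"
    by (simp add: mmult_def sum_distrib_right)
  also have "\<dots> = (\<Sum>a=1..n. \<Sum>b=1..n. B i a * lowerX n x a b * Bi b j)"
    by (rule sum.swap)
  also have "\<dots> = (\<Sum>a=1..n. \<Sum>b=1..n. if b<a then x a b * (Bi b j * B i a) else 0)"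
    by (rule sum.cong[OF refl], rule sum.cong[OF refl]) (auto simp: lowerX_def)
  finally show ?thesis .
qed

lemma L3:
  fixes B Bi x :: "nat \<Rightarrow> nat \<Rightarrow> 'a::field"
  assumes UB: "\<And>i j. i\<in>{1..n} \<Longrightarrow> j\<in>{1..n} \<Longrightarrow> j<i \<Longrightarrow> B i j = 0"
  and UBi: "\<And>i j. i\<in>{1..n} \<Longrightarrow> j\<in>{1..n} \<Longrightarrow> j<i \<Longrightarrow> Bi i j = 0"
  shows "(\<Sum>a=1..n. \<Sum>b=1..n. if b<a then x a b * (\<Sum>l=1..n. Bi b l * \<gamma> l * B l a) else 0)
     = (\<Sum>i=1..n. \<Sum>j=1..n. if j < i then (\<Sum>l=j..i. \<gamma> l * B l i * Bi j l * x i j) else 0)"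
proof (rule sum.cong[OF refl], rule sum.cong[OF refl])
  fix a b assume a: "a \<in> {1..n}" and b: "b \<in> {1..n}"
  show "(if b<a then x a b * (\<Sum>l=1..n. Bi b l * \<gamma> l * B l a) else 0)
     = (if b < a then (\<Sum>l=b..a. \<gamma> l * B l a * Bi b l * x a b) else 0)"
  proof (cases "b < a")
    case True
    have "(\<Sum>l=b..a. \<gamma> l * B l a * Bi b l * x a b) = (\<Sum>l=1..n. \<gamma> l * B l a * Bi b l * x a b)"
    proof (rule sum.mono_neutral_left)
      show "{b..a} \<subseteq> {1..n}" using a b by auto
      show "\<forall>l\<in>{1..n} - {b..a}. \<gamma> l * B l a * Bi b l * x a b = 0"
      proof
        fix l assume l: "l \<in> {1..n} - {b..a}"
        show "\<gamma> l * B l a * Bi b l * x a b = 0"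
        proof (cases "l < b")
          case True then show ?thesis using UBi[of b l] b l by auto
        next
          case False then show ?thesis using UB[of l a] a l by auto
        qed
      qed
    qed auto
    then show ?thesis using True by (simp add: sum_distrib_left mult_ac)
  qed simp
qed

lemma idL: "\<forall>a\<in>{1..n}. \<forall>k\<in>{1..n}. I a k = (if a = k then 1 else 0) \<Longrightarrow> a \<in> {1..n} \<Longrightarrow> mmult n I A a b = (A a b::'a::comm_ring_1)"
  unfolding mmult_def
  by (subst sum.cong[OF refl, where h="\<lambda>k. if k = a then A a b else 0"]) auto

lemma idR: "\<forall>a\<in>{1..n}. \<forall>k\<in>{1..n}. I a k = (if a = k then 1 else 0) \<Longrightarrow> b \<in> {1..n} \<Longrightarrow> mmult n A I a b = (A a b::'a::comm_ring_1)"
  unfolding mmult_def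
  by (subst sum.cong[OF refl, where h="\<lambda>k. if k = b then A a b else 0"]) auto

lemma inj_x:
  fixes B Bi x x' :: "nat \<Rightarrow> nat \<Rightarrow> 'a::field"
  assumes UB: "\<And>i j. i\<in>{1..n} \<Longrightarrow> j\<in>{1..n} \<Longrightarrow> j<i \<Longrightarrow> B i j = 0"
  and UBi: "\<And>i j. i\<in>{1..n} \<Longrightarrow> j\<in>{1..n} \<Longrightarrow> j<i \<Longrightarrow> Bi i j = 0"
  and inv: "is_inverse n B Bi"
  and h: "\<forall>i j. 1 \<le> j \<and> j < i \<and> i \<le> n \<longrightarrow> mmult n (mmult n B (lowerX n x)) Bi i j = mmult n (mmult n B (lowerX n x')) Bi i j"
  and ab: "1 \<le> b" "b < a" "a \<le> n"
  shows "x a b = x' a b"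
proof -
  define D where "D = lowerX n (\<lambda>a b. x a b - x' a b)"
  define Y where "Y = mmult n (mmult n B D) Bi"
  have Y0: "Y i j = 0" if "1 \<le> j" "j < i" "i \<le> n" for i j
  proof -
    have "Y i j = mmult n (mmult n B (lowerX n x)) Bi i j - mmult n (mmult n B (lowerX n x')) Bi i j"
      unfolding Y_def D_def L2
      by (auto simp: sum_subtractf[symmetric] left_diff_distrib intro!: sum.cong)
    then show ?thesis using h that by simp
  qed
  have I1: "\<forall>a\<in>{1..n}. \<forall>k\<in>{1..n}. mmult n Bi B a k = (if a = k then 1 else 0)"
    using inv unfolding is_inverse_def by auto
  have "mmult n (mmult n Bi Y) B = mmult n (mmult n (mmult n Bi B) D) (mmult n Bi B)"
    unfolding Y_def by (simp add: mmult_assoc)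
  then have "mmult n (mmult n Bi Y) B a b = D a b"
    using ab by (simp add: idR[OF I1] idL[OF I1])
  moreover have "mmult n (mmult n Bi Y) B a b = 0"
    unfolding mmult_def sum_distrib_right
  proof (intro sum.neutral ballI)
    fix k m assume k: "k \<in> {1..n}" and m: "m \<in> {1..n}"
    show "Bi a m * Y m k * B k b = 0"
    proof (cases "m < a")
      case True then show ?thesis using UBi[of a m] ab m by auto
    next
      case F1: False
      show ?thesis
      proof (cases "k < m")
        case True then show ?thesis using Y0[of k m] k m by auto
      next
        case False then show ?thesis using UB[of k b] k ab F1 by auto
      qed
    qed
  qed
  ultimately show ?thesis using ab unfolding D_def lowerX_def by simp
qed

theorem lemma1:
  fixes n :: nat and \<gamma> :: "nat \<Rightarrow> 'a::{real_normed_field,banach}"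
    and B Bi x :: "nat \<Rightarrow> nat \<Rightarrow> 'a" and x0 :: 'a
  assumes "n > 1"
    and "\<not> (\<exists>c. \<forall>i\<in>{1..n}. \<gamma> i = c)"
    and "B \<in> T_gamma n \<gamma>"
    and "is_inverse n B Bi"
  shows "(\<forall>i j. 1 \<le> j \<and> j < i \<and> i \<le> n \<longrightarrow>
            coAd n \<gamma> B Bi (x, x0) (basis_e j i) = (\<Sum>i'=i..n. \<Sum>j'=1..j. B i i' * Bi j' j * x i' j')
          \<and> coAd n \<gamma> B Bi (x, x0) (basis_e j i) = mmult n (mmult n B (lowerX n x)) Bi i j)
       \<and> coAd n \<gamma> B Bi (x, x0) basis_f =
            x0 + (\<Sum>i=1..n. \<Sum>j=1..n. if j < i then (\<Sum>l=j..i. \<gamma> l * B l i * Bi j l * x i j) else 0)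
       \<and> (\<forall>x' x0'. (\<forall>i j. 1 \<le> j \<and> j < i \<and> i \<le> n \<longrightarrow>
                        coAd n \<gamma> B Bi (x, x0) (basis_e j i) = coAd n \<gamma> B Bi (x', x0') (basis_e j i))
                   \<and> coAd n \<gamma> B Bi (x, x0) basis_f = coAd n \<gamma> B Bi (x', x0') basis_f
                   \<longrightarrow> (\<forall>i j. 1 \<le> j \<and> j < i \<and> i \<le> n \<longrightarrow> x i j = x' i j) \<and> x0 = x0')"
proof -
  note T = assms(3)[unfolded T_gamma_def, simplified]
  have UB: "\<And>i j. i\<in>{1..n} \<Longrightarrow> j\<in>{1..n} \<Longrightarrow> j<i \<Longrightarrow> B i j = 0" using T by auto
  have BD: "\<And>i. i\<in>{1..n} \<Longrightarrow> B i i \<noteq> 0" using T by auto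
  have UBi: "\<And>i j. i\<in>{1..n} \<Longrightarrow> j\<in>{1..n} \<Longrightarrow> j<i \<Longrightarrow> Bi i j = 0"
    by (rule Bi_upper[OF UB BD assms(4)]) (auto simp: mult_eq_0_iff)
  have Di: "Bi a a * B a a = 1" if a: "a \<in> {1..n}" for a
  proof -
    have "mmult n Bi B a a = 1" using assms(4) a unfolding is_inverse_def by auto
    hence "(\<Sum>k=1..n. Bi a k * B k a) = 1" by (simp add: mmult_def)
    moreover have "(\<Sum>k=1..n. Bi a k * B k a) = (\<Sum>k=1..n. if k = a then Bi a a * B a a else 0)"
    proof (rule sum.cong[OF refl])
      fix k assume k: "k \<in> {1..n}"
      show "Bi a k * B k a = (if k = a then Bi a a * B a a else 0)"
        using UB[of k a] UBi[of a k] k a by (cases "k < a"; cases "k = a") auto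
    qed
    ultimately show ?thesis using a by simp
  qed
  obtain a0 where g: "a0 \<in> {1..n}" "\<gamma> a0 \<noteq> 0" proof -
    have "\<not>(\<forall>i\<in>{1..n}. \<gamma> i = 0)" using assms(2) by blast
    then show ?thesis using that by blast
  qed
  have E: "coAd n \<gamma> B Bi (y, y0) (basis_e j i) = mmult n (mmult n B (lowerX n y)) Bi i j"
    if "1 \<le> j" "j < i" "i \<le> n" for y y0 i j
  proof -
    have "coAd n \<gamma> B Bi (y, y0) (basis_e j i) = (\<Sum>a=1..n. \<Sum>b=1..n. if b<a then y a b * (Bi b j * B i a) else 0)"
      by (rule coAd_e[where n=n and B=B and Bi=Bi and \<gamma>=\<gamma> and z=a0]) (use UB UBi g that in auto)
    also have "\<dots> = mmult n (mmult n B (lowerX n y)) Bi i j" by (rule L2[symmetric])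
    finally show ?thesis .
  qed
  have F: "coAd n \<gamma> B Bi (y, y0) basis_f = y0 + (\<Sum>i=1..n. \<Sum>j=1..n. if j < i then (\<Sum>l=j..i. \<gamma> l * B l i * Bi j l * y i j) else 0)" for y y0
  proof -
    have "coAd n \<gamma> B Bi (y, y0) basis_f = y0 + (\<Sum>a=1..n. \<Sum>b=1..n. if b<a then y a b * (\<Sum>l=1..n. Bi b l * \<gamma> l * B l a) else 0)"
      by (rule coAd_f[where n=n and B=B and Bi=Bi and \<gamma>=\<gamma> and z=a0]) (use UB UBi Di g in auto)
    also have "\<dots> = y0 + (\<Sum>i=1..n. \<Sum>j=1..n. if j < i then (\<Sum>l=j..i. \<gamma> l * B l i * Bi j l * y i j) else 0)"
      using L3[where n=n and B=B and Bi=Bi and x=y and \<gamma>=\<gamma>] UB UBi by simp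
    finally show ?thesis .
  qed
  show ?thesis
  proof (intro conjI allI impI)
    fix i j assume ij: "1 \<le> j \<and> j < i \<and> i \<le> n"
    show "coAd n \<gamma> B Bi (x, x0) (basis_e j i) = (\<Sum>i'=i..n. \<Sum>j'=1..j. B i i' * Bi j' j * x i' j')"
    proof -
      have l1: "(\<Sum>i'=i..n. \<Sum>j'=1..j. B i i' * Bi j' j * x i' j') = (\<Sum>a=1..n. \<Sum>b=1..n. if b<a then x a b * (Bi b j * B i a) else 0)"
        by (rule L1[where n=n and B=B and Bi=Bi]) (use UB UBi ij in auto)
      have "coAd n \<gamma> B Bi (x, x0) (basis_e j i) = (\<Sum>a=1..n. \<Sum>b=1..n. if b<a then x a b * (Bi b j * B i a) else 0)"
        by (rule coAd_e[where n=n and B=B and Bi=Bi and \<gamma>=\<gamma> and z=a0]) (use UB UBi g ij in auto)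
      then show ?thesis using l1 by simp
    qed

    show "coAd n \<gamma> B Bi (x, x0) (basis_e j i) = mmult n (mmult n B (lowerX n x)) Bi i j"
      using ij by (intro E) auto
  next
    show "coAd n \<gamma> B Bi (x, x0) basis_f =
            x0 + (\<Sum>i=1..n. \<Sum>j=1..n. if j < i then (\<Sum>l=j..i. \<gamma> l * B l i * Bi j l * x i j) else 0)"
      by (rule F)
  next
    fix x' x0'
    assume H: "(\<forall>i j. 1 \<le> j \<and> j < i \<and> i \<le> n \<longrightarrow>
                        coAd n \<gamma> B Bi (x, x0) (basis_e j i) = coAd n \<gamma> B Bi (x', x0') (basis_e j i))
                   \<and> coAd n \<gamma> B Bi (x, x0) basis_f = coAd n \<gamma> B Bi (x', x0') basis_f"
    have h: "\<forall>i j. 1 \<le> j \<and> j < i \<and> i \<le> n \<longrightarrow> mmult n (mmult n B (lowerX n x)) Bi i j = mmult n (mmult n B (lowerX n x')) Bi i j"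
    proof (intro allI impI)
      fix i j assume ij: "1 \<le> j \<and> j < i \<and> i \<le> n"
      then have "coAd n \<gamma> B Bi (x, x0) (basis_e j i) = coAd n \<gamma> B Bi (x', x0') (basis_e j i)" using H by blast
      then show "mmult n (mmult n B (lowerX n x)) Bi i j = mmult n (mmult n B (lowerX n x')) Bi i j"
        using E[of j i x x0] E[of j i x' x0'] ij by simp
    qed
    have xx: "\<forall>i j. 1 \<le> j \<and> j < i \<and> i \<le> n \<longrightarrow> x i j = x' i j"
      by (intro allI impI, rule inj_x[where n=n and B=B and Bi=Bi and x=x and x'=x']) (use UB UBi assms(4) h in auto)
    show "x i j = x' i j" if "1 \<le> j \<and> j < i \<and> i \<le> n" for i j using xx that by blast
    have "(\<Sum>i=1..n. \<Sum>j=1..n. if j < i then (\<Sum>l=j..i. \<gamma> l * B l i * Bi j l * x i j) else 0)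
        = (\<Sum>i=1..n. \<Sum>j=1..n. if j < i then (\<Sum>l=j..i. \<gamma> l * B l i * Bi j l * x' i j) else 0)"
      using xx by (auto intro!: sum.cong)
    then show "x0 = x0'" using H F[of x x0] F[of x' x0'] by simp
  qed
qed

end
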